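(* For each $n=1,2,\dots$ there is a function $f:\{-1,1\}^n\to \mathbb{R}$ with \[ \|f\|_2=1\le \|f\|_\infty\le\sqrt2,\qquad I(f)<1, \qquad \text{and}\qquad H(\hat f^2)>\frac{n}{n+1}\log n. \]
   Context: Equip $\{-1,1\}^n$ with the uniform (normalized counting) probability measure. For $g:\{-1,1\}^n\to\mathbb{C}$, $\|g\|_2^2=2^{-n}\sum_{\delta\in\{-1,1\}^n}|g(\delta)|^2$ and $\|g\|_\infty=\max_{\delta}|g(\delta)|$. Let $\varepsilon_i:\{-1,1\}^n\to\{-1,1\}$ be the $i$-th coordinate projection, and for $A\subseteq[n]=\{1,\dots,n\}$ let $W_A=\prod_{i\in A}\varepsilon_i$. The Fourier–Walsh coefficients are $\hat g(A)=2^{-n}\sum_{\delta\in\{-1,1\}^n} g(\delta)W_A(\delta)$, so $g=\sum_{A\subseteq[n]}\hat g(A)W_A$. The influence is $I(g)=\sum_{A\subseteq[n]}|\hat g(A)|^2|A|$, and the Fourier entropy is $H(|\hat g|^2)=-\sum_{A\subseteq[n]}|\hat g(A)|^2\log|\hat g(A)|^2$ with $0\log 0=0$ (for real $g$ this is written $H(\hat g^2)$). Logarithms are to base $2$. *)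

theory Defs
  imports "HOL-Analysis.Analysis"
begin

definition cube :: "nat \<Rightarrow> (nat \<Rightarrow> real) set" where
  "cube n = ({..<n} \<rightarrow>\<^sub>E {-1, 1})"

definition walsh :: "nat set \<Rightarrow> (nat \<Rightarrow> real) \<Rightarrow> real" where
  "walsh A d = (\<Prod>i\<in>A. d i)"

definition cube_avg :: "nat \<Rightarrow> ((nat \<Rightarrow> real) \<Rightarrow> real) \<Rightarrow> real" where
  "cube_avg n g = (\<Sum>d\<in>cube n. g d) / 2 ^ n"

definition norm2 :: "nat \<Rightarrow> ((nat \<Rightarrow> real) \<Rightarrow> real) \<Rightarrow> real" where
  "norm2 n g = sqrt (cube_avg n (\<lambda>d. (g d)\<^sup>2))"

definition norm_inf :: "nat \<Rightarrow> ((nat \<Rightarrow> real) \<Rightarrow> real) \<Rightarrow> real" where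
  "norm_inf n g = Max ((\<lambda>d. \<bar>g d\<bar>) ` cube n)"

definition fourier :: "nat \<Rightarrow> ((nat \<Rightarrow> real) \<Rightarrow> real) \<Rightarrow> nat set \<Rightarrow> real" where
  "fourier n g A = cube_avg n (\<lambda>d. g d * walsh A d)"

definition influence :: "nat \<Rightarrow> ((nat \<Rightarrow> real) \<Rightarrow> real) \<Rightarrow> real" where
  "influence n g = (\<Sum>A\<in>Pow {..<n}. (fourier n g A)\<^sup>2 * real (card A))"

definition fourier_entropy :: "nat \<Rightarrow> ((nat \<Rightarrow> real) \<Rightarrow> real) \<Rightarrow> real" where
  "fourier_entropy n g = - (\<Sum>A\<in>Pow {..<n}.
      (if fourier n g A = 0 then 0 else (fourier n g A)\<^sup>2 * log 2 ((fourier n g A)\<^sup>2)))"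

end

theory Submission
  imports Defs
begin

lemma cube_finite: "finite (cube n)"
  unfolding cube_def by (auto intro: finite_PiE)

lemma cube_nonempty: "cube n \<noteq> {}"
  unfolding cube_def by (simp add: PiE_eq_empty_iff)

lemma cube_val: "d \<in> cube n \<Longrightarrow> i < n \<Longrightarrow> d i = -1 \<or> d i = 1"
  unfolding cube_def by (auto simp: PiE_def Pi_def)

lemma walsh_prod:
  assumes "A \<subseteq> {..<n}"
  shows "walsh A d = (\<Prod>i<n. if i \<in> A then d i else 1)"
proof -
  have "(\<Prod>i<n. if i \<in> A then d i else 1) = (\<Prod>i\<in>{..<n} \<inter> A. d i)"
    by (simp add: prod.If_cases)
  also have "{..<n} \<inter> A = A" using assms by auto
  finally show ?thesis by (simp add: walsh_def)
qed

lemma walsh_sum: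
  assumes "A \<subseteq> {..<n}"
  shows "(\<Sum>d\<in>cube n. walsh A d) = (if A = {} then 2 ^ n else 0)"
proof -
  have "(\<Sum>d\<in>cube n. walsh A d) = (\<Sum>d\<in>cube n. \<Prod>i<n. if i \<in> A then d i else 1)"
    using walsh_prod[OF assms] by simp
  also have "\<dots> = (\<Prod>i<n. \<Sum>x\<in>{-1,1::real}. if i \<in> A then x else 1)"
    unfolding cube_def by (subst prod_sum_PiE) auto
  also have "\<dots> = (\<Prod>i<n. if i \<in> A then 0 else 2)"
    by (intro prod.cong) auto
  also have "\<dots> = (if A = {} then 2 ^ n else 0)"
  proof (cases "A = {}")
    case True then show ?thesis by simp
  next
    case False
    then obtain j where "j \<in> A" by auto
    with assms have "j < n" by auto
    then show ?thesis using False \<open>j \<in> A\<close>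
      by (intro trans[OF prod_zero]) auto
  qed
  finally show ?thesis .
qed

lemma walsh_mult:
  assumes "d \<in> cube n" "A \<subseteq> {..<n}" "B \<subseteq> {..<n}"
  shows "walsh A d * walsh B d = walsh ((A - B) \<union> (B - A)) d"
proof -
  have fin: "finite A" "finite B" using assms finite_subset by blast+
  have sq: "(\<Prod>i\<in>A \<inter> B. d i) * (\<Prod>i\<in>A \<inter> B. d i) = 1"
  proof -
    have "(\<Prod>i\<in>A \<inter> B. d i) * (\<Prod>i\<in>A \<inter> B. d i) = (\<Prod>i\<in>A \<inter> B. d i * d i)"
      by (simp add: prod.distrib)
    also have "\<dots> = 1"
      using cube_val[OF assms(1)] assms(2) by (intro prod.neutral) force
    finally show ?thesis .
  qed
  have a: "walsh A d = (\<Prod>i\<in>A - B. d i) * (\<Prod>i\<in>A \<inter> B. d i)"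
    unfolding walsh_def using fin by (subst prod.union_disjoint[symmetric]) (auto intro: prod.cong)
  have b: "walsh B d = (\<Prod>i\<in>B - A. d i) * (\<Prod>i\<in>A \<inter> B. d i)"
    unfolding walsh_def using fin by (subst prod.union_disjoint[symmetric]) (auto intro: prod.cong)
  have c: "walsh ((A - B) \<union> (B - A)) d = (\<Prod>i\<in>A - B. d i) * (\<Prod>i\<in>B - A. d i)"
    unfolding walsh_def using fin by (subst prod.union_disjoint) auto
  show ?thesis unfolding a b c using sq
    by (metis (no_types, lifting) mult.assoc mult.commute mult.left_commute mult_1_right)
qed


lemma fourier_expansion:
  assumes "A \<subseteq> {..<n}"
    and g: "\<And>d. d \<in> cube n \<Longrightarrow> g d = (\<Sum>B\<in>Pow {..<n}. a B * walsh B d)"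
  shows "fourier n g A = a A"
proof -
  have "(\<Sum>d\<in>cube n. g d * walsh A d) = (\<Sum>d\<in>cube n. \<Sum>B\<in>Pow {..<n}. a B * (walsh B d * walsh A d))"
    using g by (simp add: sum_distrib_right mult.assoc)
  also have "\<dots> = (\<Sum>B\<in>Pow {..<n}. \<Sum>d\<in>cube n. a B * walsh ((B - A) \<union> (A - B)) d)"
    by (subst sum.swap) (intro sum.cong refl, use assms in \<open>auto simp: walsh_mult\<close>)
  also have "\<dots> = (\<Sum>B\<in>Pow {..<n}. a B * (if (B - A) \<union> (A - B) = {} then 2 ^ n else 0))"
    by (intro sum.cong refl, subst sum_distrib_left[symmetric], subst walsh_sum) (use assms in auto)
  also have "\<dots> = (\<Sum>B\<in>Pow {..<n}. if B = A then a B * 2 ^ n else 0)"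
    by (intro sum.cong refl) auto
  also have "\<dots> = a A * 2 ^ n"
    using assms by (simp add: sum.delta)
  finally show ?thesis unfolding fourier_def cube_avg_def by simp
qed

lemma parseval:
  assumes g: "\<And>d. d \<in> cube n \<Longrightarrow> g d = (\<Sum>B\<in>Pow {..<n}. a B * walsh B d)"
  shows "cube_avg n (\<lambda>d. (g d)\<^sup>2) = (\<Sum>B\<in>Pow {..<n}. (a B)\<^sup>2)"
proof -
  have "(\<Sum>d\<in>cube n. (g d)\<^sup>2) = (\<Sum>d\<in>cube n. \<Sum>B\<in>Pow {..<n}. a B * (g d * walsh B d))"
    using g by (simp add: power2_eq_square sum_distrib_left sum_distrib_right mult_ac)
  also have "\<dots> = (\<Sum>B\<in>Pow {..<n}. a B * (\<Sum>d\<in>cube n. g d * walsh B d))"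
    by (subst sum.swap) (simp add: sum_distrib_left)
  also have "\<dots> = (\<Sum>B\<in>Pow {..<n}. a B * (fourier n g B * 2 ^ n))"
    by (simp add: fourier_def cube_avg_def)
  also have "\<dots> = (\<Sum>B\<in>Pow {..<n}. (a B)\<^sup>2) * 2 ^ n"
  proof -
    have "\<And>B. B \<in> Pow {..<n} \<Longrightarrow> fourier n g B = a B" using fourier_expansion g by auto
    then have "(\<Sum>B\<in>Pow {..<n}. a B * (fourier n g B * 2 ^ n)) = (\<Sum>B\<in>Pow {..<n}. (a B)\<^sup>2 * 2 ^ n)"
      by (intro sum.cong refl) (simp add: power2_eq_square)
    then show ?thesis by (simp add: sum_distrib_right)
  qed
  finally show ?thesis unfolding cube_avg_def by simp
qed

lemma pow_sum_step:
  "(\<Sum>A\<in>Pow {..<Suc n}. F A) = (\<Sum>A\<in>Pow {..<n}. F A) + (\<Sum>A\<in>Pow {..<n}. F (insert n A))"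
proof -
  have "Pow {..<Suc n} = Pow {..<n} \<union> insert n ` Pow {..<n}"
    by (simp add: lessThan_Suc Pow_insert)
  moreover have "Pow {..<n} \<inter> insert n ` Pow {..<n} = {}" by auto
  moreover have "inj_on (insert n) (Pow {..<n})"
    by (auto simp: inj_on_def)
  ultimately show ?thesis
    by (simp add: sum.union_disjoint sum.reindex)
qed

lemma card_insert_pow: "A \<in> Pow {..<(n::nat)} \<Longrightarrow> card (insert n A) = Suc (card A)"
proof -
  assume "A \<in> Pow {..<n}"
  then have "finite A" using finite_subset[of A "{..<n}"] by blast
  have "n \<notin> A" using \<open>A \<in> Pow {..<n}\<close> by auto
  then show ?thesis using \<open>finite A\<close> by simp
qed

lemma pow_sum0: "(\<Sum>A\<in>Pow {..<n}. (r::real) ^ card A) = (1 + r) ^ n"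
proof (induction n)
  case 0 then show ?case by simp
next
  case (Suc n)
  have "(\<Sum>A\<in>Pow {..<n}. r ^ card (insert n A)) = r * (\<Sum>A\<in>Pow {..<n}. r ^ card A)"
    by (simp add: sum_distrib_left) (intro sum.cong refl, simp add: card_insert_pow)
  then show ?case by (simp add: pow_sum_step Suc algebra_simps)
qed

lemma pow_sum1: "(\<Sum>A\<in>Pow {..<n}. (r::real) ^ card A * real (card A)) * (1 + r) = real n * r * (1 + r) ^ n"
proof (induction n)
  case 0 then show ?case by simp
next
  case (Suc n)
  define S where "S = (\<Sum>A\<in>Pow {..<n}. r ^ card A * real (card A))"
  have "(\<Sum>A\<in>Pow {..<n}. r ^ card (insert n A) * real (card (insert n A)))
      = r * S + r * (\<Sum>A\<in>Pow {..<n}. r ^ card A)"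
    unfolding S_def
    by (simp add: sum_distrib_left sum.distrib[symmetric]) (intro sum.cong refl, simp add: card_insert_pow algebra_simps)
  then have "(\<Sum>A\<in>Pow {..<Suc n}. r ^ card A * real (card A)) = S + r * S + r * (1 + r) ^ n"
    by (simp add: pow_sum_step pow_sum0 S_def)
  then have "(\<Sum>A\<in>Pow {..<Suc n}. r ^ card A * real (card A)) * (1 + r) = S * (1 + r) * (1 + r) + r * (1 + r) ^ Suc n"
    by (simp add: algebra_simps)
  also have "\<dots> = real (Suc n) * r * (1 + r) ^ Suc n"
    using Suc unfolding S_def[symmetric] by (simp add: algebra_simps)
  finally show ?case .
qed


definition sI :: "nat \<Rightarrow> real" where "sI k = Re (\<i> ^ k) + Im (\<i> ^ k)"

lemma ipow_cases: "\<i> ^ k = 1 \<or> \<i> ^ k = \<i> \<or> \<i> ^ k = -1 \<or> \<i> ^ k = - \<i>"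
  by (induction k) auto

lemma sI_sq: "(sI k)\<^sup>2 = 1"
  using ipow_cases[of k] unfolding sI_def by auto

definition tt :: "nat \<Rightarrow> real" where "tt n = 1 / sqrt (real n)"
definition cc :: "nat \<Rightarrow> real" where "cc n = sqrt (real n / (real n + 1)) ^ n"
definition coef :: "nat \<Rightarrow> nat set \<Rightarrow> real" where
  "coef n A = sI (card A) * cc n * tt n ^ card A"
definition ff :: "nat \<Rightarrow> (nat \<Rightarrow> real) \<Rightarrow> real" where
  "ff n d = (\<Sum>A\<in>Pow {..<n}. coef n A * walsh A d)"

lemma coef_sq:
  assumes "n \<ge> 1"
  shows "(coef n A)\<^sup>2 = (real n / (real n + 1)) ^ n * (1 / real n) ^ card A"
proof -
  have "(coef n A)\<^sup>2 = (sI (card A))\<^sup>2 * (cc n)\<^sup>2 * ((tt n)\<^sup>2) ^ card A"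
    unfolding coef_def by (simp add: power_mult_distrib power_mult[symmetric] mult.commute)
  also have "(cc n)\<^sup>2 = (real n / (real n + 1)) ^ n"
    unfolding cc_def by (simp add: power_mult[symmetric] mult.commute[of n] power_mult)
  also have "(tt n)\<^sup>2 = 1 / real n"
    unfolding tt_def using assms by (simp add: power_divide)
  finally show ?thesis by (simp add: sI_sq)
qed

lemma re_im_bound: "\<bar>Re z + Im z\<bar> \<le> sqrt 2 * cmod z"
proof -
  have "\<bar>Re z + Im z\<bar> = sqrt ((Re z + Im z)\<^sup>2)" by simp
  also have "\<dots> \<le> sqrt (2 * ((Re z)\<^sup>2 + (Im z)\<^sup>2))"
    by (intro real_sqrt_le_mono) (smt (verit) sum_squares_ge_zero power2_sum sum_power2_ge_zero zero_le_power2 power2_diff)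
  also have "\<dots> = sqrt 2 * cmod z"
    by (simp add: cmod_def real_sqrt_mult[symmetric] distrib_left)
  finally show ?thesis .
qed

lemma ff_bound:
  assumes "n \<ge> 1" "d \<in> cube n"
  shows "\<bar>ff n d\<bar> \<le> sqrt 2"
proof -
  define t where "t = tt n"
  define P where "P = (\<Prod>i<n. \<i> * complex_of_real (t * d i) + 1)"
  have P: "P = (\<Sum>X\<in>Pow {..<n}. \<i> ^ card X * complex_of_real (t ^ card X * walsh X d))"
    unfolding P_def
  proof (subst prod_add, simp, intro sum.cong refl)
    fix X assume X: "X \<in> Pow {..<n}"
    then have "finite X" using finite_subset[of X "{..<n}"] by blast
    then show "(\<Prod>x\<in>X. \<i> * complex_of_real (t * d x)) * (\<Prod>x\<in>{..<n} - X. 1) =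
          \<i> ^ card X * complex_of_real (t ^ card X * walsh X d)"
      by (simp add: prod.distrib walsh_def of_real_prod)
  qed
  have eq: "ff n d = Re (complex_of_real (cc n) * P) + Im (complex_of_real (cc n) * P)"
    unfolding ff_def P coef_def sI_def t_def sum_distrib_left Re_sum Im_sum sum.distrib[symmetric]
    by (intro sum.cong refl) (simp add: algebra_simps)
  have "cmod P = (\<Prod>i<n. cmod (\<i> * complex_of_real (t * d i) + 1))"
    unfolding P_def by (simp add: prod_norm)
  also have "\<dots> = (\<Prod>i<n. sqrt (1 + t\<^sup>2))"
  proof (intro prod.cong refl)
    fix i assume "i \<in> {..<n}"
    then have "(d i)\<^sup>2 = 1" using cube_val[OF assms(2)] by force
    then show "cmod (\<i> * complex_of_real (t * d i) + 1) = sqrt (1 + t\<^sup>2)"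
      by (simp add: cmod_def power_mult_distrib)
  qed
  also have "\<dots> = sqrt (1 + t\<^sup>2) ^ n" by simp
  finally have cP: "cmod P = sqrt (1 + t\<^sup>2) ^ n" .
  have "cmod (complex_of_real (cc n) * P) = cc n * sqrt (1 + t\<^sup>2) ^ n"
    using cP by (simp add: norm_mult cc_def norm_power)
  also have "\<dots> = sqrt (real n / (real n + 1) * (1 + t\<^sup>2)) ^ n"
    unfolding cc_def by (simp only: real_sqrt_mult power_mult_distrib)
  also have "real n / (real n + 1) * (1 + t\<^sup>2) = 1"
  proof -
    have "real n > 0" using assms(1) by simp
    then have "real n + real n * real n \<noteq> 0" by (smt (verit) mult_pos_pos)
    then show ?thesis unfolding t_def tt_def using \<open>real n > 0\<close> by (simp add: power_divide field_simps)
  qed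
  finally have "cmod (complex_of_real (cc n) * P) = 1" by simp
  then show ?thesis using eq re_im_bound[of "complex_of_real (cc n) * P"] by simp
qed


theorem theorem1:
  fixes n :: nat
  assumes "n \<ge> 1"
  shows "\<exists>f :: (nat \<Rightarrow> real) \<Rightarrow> real.
           norm2 n f = 1 \<and> 1 \<le> norm_inf n f \<and> norm_inf n f \<le> sqrt 2 \<and>
           influence n f < 1 \<and>
           fourier_entropy n f > real n / real (n + 1) * log 2 (real n)"
proof (intro exI conjI)
  define f where "f = ff n"
  define q where "q = real n / (real n + 1)"
  define r where "r = 1 / real n"
  have npos: "real n > 0" using assms by simp
  have qpos: "q > 0" and rpos: "r > 0" using npos by (auto simp: q_def r_def)
  have q1: "q * (1 + r) = 1"
  proof -
    have "real n + 1 \<noteq> 0" using npos by simp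
    then show ?thesis using npos by (simp add: q_def r_def divide_simps)
  qed
  have q1n: "q ^ n * (1 + r) ^ n = 1" using q1 by (metis power_mult_distrib power_one)
  have fexp: "\<And>d. d \<in> cube n \<Longrightarrow> f d = (\<Sum>B\<in>Pow {..<n}. coef n B * walsh B d)"
    by (simp add: f_def ff_def)
  have four: "\<And>A. A \<in> Pow {..<n} \<Longrightarrow> (fourier n f A)\<^sup>2 = q ^ n * r ^ card A"
    using fourier_expansion[OF _ fexp] coef_sq[OF assms] by (simp add: q_def r_def)
  have sumw: "(\<Sum>A\<in>Pow {..<n}. q ^ n * r ^ card A) = 1"
    using q1n by (simp add: sum_distrib_left[symmetric] pow_sum0)
  have sumw1: "(\<Sum>A\<in>Pow {..<n}. q ^ n * r ^ card A * real (card A)) = real n * r / (1 + r)"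
  proof -
    have "(\<Sum>A\<in>Pow {..<n}. q ^ n * r ^ card A * real (card A)) = q ^ n * (\<Sum>A\<in>Pow {..<n}. r ^ card A * real (card A))"
      by (simp add: sum_distrib_left mult.assoc)
    also have "\<dots> = q ^ n * (real n * r * (1 + r) ^ n) / (1 + r)"
    proof -
      have "(1 + r) > 0" using rpos by simp
      then show ?thesis using pow_sum1[of r n] by (simp add: nonzero_eq_divide_eq)
    qed
    also have "\<dots> = real n * r / (1 + r)"
      using q1n by (simp add: algebra_simps)
    finally show ?thesis .
  qed
  have n2: "cube_avg n (\<lambda>d. (f d)\<^sup>2) = 1"
    using parseval[OF fexp] coef_sq[OF assms] sumw by (simp add: q_def r_def)
  then show "norm2 n f = 1" unfolding norm2_def by simp
  have bnd: "\<And>d. d \<in> cube n \<Longrightarrow> \<bar>f d\<bar> \<le> sqrt 2" using ff_bound[OF assms] f_def by simp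
  show "norm_inf n f \<le> sqrt 2" unfolding norm_inf_def
    using bnd cube_finite cube_nonempty by (simp add: Max_le_iff)
  show "1 \<le> norm_inf n f"
  proof -
    define M where "M = norm_inf n f"
    have le: "\<And>d. d \<in> cube n \<Longrightarrow> \<bar>f d\<bar> \<le> M"
      unfolding M_def norm_inf_def using cube_finite by (intro Max_ge) auto
    have M0: "M \<ge> 0" using le cube_nonempty by (meson abs_ge_zero all_not_in_conv order_trans)
    have "(\<Sum>d\<in>cube n. (f d)\<^sup>2) \<le> (\<Sum>d\<in>cube n. M\<^sup>2)"
      by (intro sum_mono) (metis abs_ge_zero le power2_abs power_mono)
    also have "\<dots> = 2 ^ n * M\<^sup>2"
      by (simp add: cube_def card_PiE)
    finally have "(\<Sum>d\<in>cube n. (f d)\<^sup>2) \<le> 2 ^ n * M\<^sup>2" .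
    moreover have "(\<Sum>d\<in>cube n. (f d)\<^sup>2) = 2 ^ n" using n2 unfolding cube_avg_def by simp
    ultimately have "1 \<le> M\<^sup>2" by simp
    then show ?thesis unfolding M_def[symmetric] using M0
      by (metis power2_le_imp_le power_one)
  qed
  show "influence n f < 1"
  proof -
    have "influence n f = real n * r / (1 + r)"
      unfolding influence_def sumw1[symmetric] using four by (intro sum.cong refl) simp
    also have "\<dots> < 1" using npos rpos by (simp add: r_def field_simps)
    finally show ?thesis .
  qed
  show "fourier_entropy n f > real n / real (n + 1) * log 2 (real n)"
  proof -
    have "fourier_entropy n f = - (\<Sum>A\<in>Pow {..<n}. q ^ n * r ^ card A * (real n * log 2 q + real (card A) * log 2 r))"
      unfolding fourier_entropy_def
    proof (intro arg_cong[where f=uminus] sum.cong refl)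
      fix A assume A: "A \<in> Pow {..<n}"
      have ne: "fourier n f A \<noteq> 0" using four[OF A] qpos rpos by (metis power_zero_numeral zero_less_power mult_pos_pos less_irrefl)
      have "log 2 (q ^ n * r ^ card A) = real n * log 2 q + real (card A) * log 2 r"
        using qpos rpos by (simp add: log_mult log_nat_power)
      then show "(if fourier n f A = 0 then 0 else (fourier n f A)\<^sup>2 * log 2 ((fourier n f A)\<^sup>2)) =
          q ^ n * r ^ card A * (real n * log 2 q + real (card A) * log 2 r)"
        using ne four[OF A] by simp
    qed
    also have "\<dots> = - (real n * log 2 q * (\<Sum>A\<in>Pow {..<n}. q ^ n * r ^ card A)
                     + log 2 r * (\<Sum>A\<in>Pow {..<n}. q ^ n * r ^ card A * real (card A)))"
      by (simp add: distrib_left sum.distrib sum_distrib_left sum_distrib_right mult_ac)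
    also have "\<dots> = - real n * log 2 q + real n / real (n + 1) * log 2 (real n)"
    proof -
      have a: "real n * r / (1 + r) = real n / real (n + 1)"
        using npos by (simp add: r_def field_simps)
      have b: "log 2 r = - log 2 (real n)" using npos by (simp add: r_def log_divide)
      show ?thesis unfolding sumw sumw1 a b by simp
    qed
    also have "\<dots> > real n / real (n + 1) * log 2 (real n)"
    proof -
      have "q < 1" using npos by (simp add: q_def)
      then have "log 2 q < 0" using qpos by simp
      then show ?thesis using npos by (simp add: mult_pos_neg)
    qed
    finally show ?thesis .
  qed
qed

end
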